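(* For every integer $p\ge0$ and every complex $z$ with $e^z\ne1$, $$\sum_{n\ge0}\mathcal{B}_{n,p}\frac{z^n}{n!}=\frac{p!\,\exp(e^z-1)}{(e^z-1)^p}-\sum_{k=1}^{p}\frac{p^{\underline k}}{(e^z-1)^k}.$$
   Context: $p^{\underline k}=p(p-1)\cdots(p-k+1)$ is the falling factorial. For an integer $p\ge0$, the $p$-Bell numbers $\mathcal{B}_{n,p}$ are defined by $\sum_{n\ge0}\mathcal{B}_{n,p}\frac{z^n}{n!}=\sum_{n\ge0}\binom{n+p}{p}^{-1}\frac{(e^z-1)^n}{n!}$ (an entire function of $z$ whose Taylor series is the left side). *)

theory Defs
  imports "HOL-Analysis.Analysis"
begin

definition falling_fact :: "nat \<Rightarrow> nat \<Rightarrow> nat" where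
  "falling_fact p k = (\<Prod>i<k. (p - i))"

text \<open>The entire function whose Taylor series defines the p-Bell numbers:
  F_p(z) = sum_n binom(n+p,p)^(-1) (e^z-1)^n / n!.\<close>
definition pBell_egf :: "nat \<Rightarrow> complex \<Rightarrow> complex" where
  "pBell_egf p z = (\<Sum>n. (exp z - 1) ^ n / (of_nat ((n + p) choose p) * fact n))"

definition pBell :: "nat \<Rightarrow> nat \<Rightarrow> complex" where
  "pBell n p = (deriv ^^ n) (pBell_egf p) 0"

end

theory Submission
  imports Defs "HOL-Complex_Analysis.Complex_Analysis"
begin

definition gser :: "nat \<Rightarrow> complex \<Rightarrow> complex" where
  "gser p w = (\<Sum>n. w ^ n / (of_nat ((n + p) choose p) * fact n))"

lemma coef_eq: "(of_nat ((n + p) choose p) * fact n :: complex) = fact (n + p) / fact p"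
proof -
  have "fact p * fact n * ((n + p) choose p) = (fact (n + p) :: nat)"
    using binomial_fact_lemma[of p "n+p"] by simp
  hence "(fact p * fact n * of_nat ((n + p) choose p) :: complex) = fact (n + p)"
    by (metis of_nat_fact of_nat_mult)
  thus ?thesis by (simp add: field_simps)
qed

lemma gser_summable: "summable (\<lambda>n. w ^ n / (of_nat ((n + p) choose p) * fact n :: complex))"
proof (rule summable_comparison_test[OF _ summable_exp[of "norm w"]])
  show "\<exists>N. \<forall>n\<ge>N. norm (w ^ n / (of_nat ((n + p) choose p) * fact n :: complex))
           \<le> inverse (fact n) * norm w ^ n"
  proof (intro exI allI impI)
    fix n :: nat
    have c: "(1::real) \<le> of_nat ((n + p) choose p)"
      by (metis One_nat_def Suc_leI le_add2 of_nat_1 of_nat_le_iff zero_less_binomial)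
    have "norm (w ^ n / (of_nat ((n + p) choose p) * fact n :: complex))
        = norm w ^ n / (of_nat ((n + p) choose p) * fact n)"
      by (simp add: norm_divide norm_mult norm_power)
    also have "\<dots> \<le> norm w ^ n / (1 * fact n)"
      by (rule divide_left_mono) (use c in auto)
    finally show "norm (w ^ n / (of_nat ((n + p) choose p) * fact n :: complex))
           \<le> inverse (fact n) * norm w ^ n" by (simp add: field_simps)
  qed
qed

lemma gser_holo: "gser p holomorphic_on UNIV"
proof -
  have hb: "gser p holomorphic_on ball 0 r" for r
  proof (rule power_series_holomorphic[where a = "\<lambda>n. 1 / (of_nat ((n + p) choose p) * fact n)"])
    fix w :: complex
    have "(\<lambda>n. w ^ n / (of_nat ((n + p) choose p) * fact n)) sums gser p w"
      unfolding gser_def by (rule summable_sums[OF gser_summable])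
    moreover have "(\<lambda>n. 1 / (of_nat ((n + p) choose p) * fact n) * (w - 0) ^ n)
       = (\<lambda>n. w ^ n / (of_nat ((n + p) choose p) * fact n))" by simp
    ultimately show "(\<lambda>n. 1 / (of_nat ((n + p) choose p) * fact n) * (w - 0) ^ n) sums gser p w"
      by simp
  qed
  show ?thesis
    unfolding holomorphic_on_def
  proof
    fix w :: complex
    have "gser p field_differentiable at w"
      using holomorphic_on_imp_differentiable_at[OF hb[of "norm w + 1"]] by simp
    thus "gser p field_differentiable at w within UNIV"
      using field_differentiable_at_within by blast
  qed
qed

lemma ff_fact: "k \<le> p \<Longrightarrow> falling_fact p k * fact (p - k) = fact p"
proof (induction k)
  case 0 thus ?case by (simp add: falling_fact_def)
next
  case (Suc k)
  have ff: "falling_fact p (Suc k) = falling_fact p k * (p - k)"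
    by (simp add: falling_fact_def)
  have "fact (p - k) = (p - k) * fact (p - Suc k)"
  proof -
    have "p - k = Suc (p - Suc k)" using Suc.prems by simp
    thus ?thesis by simp
  qed
  hence "falling_fact p (Suc k) * fact (p - Suc k) = falling_fact p k * fact (p - k)"
    unfolding ff by (simp only: mult.assoc)
  also have "\<dots> = fact p" using Suc by simp
  finally show ?case .
qed

lemma gser_closed:
  assumes w: "w \<noteq> 0"
  shows "gser p w = fact p * exp w / w ^ p - (\<Sum>k=1..p. of_nat (falling_fact p k) / w ^ k)"
proof -
  have e: "(\<lambda>n. w ^ n /\<^sub>R fact n) sums exp w" by (rule exp_converges)
  have "(\<lambda>n. w ^ (n + p) /\<^sub>R fact (n + p)) sums (exp w - (\<Sum>i<p. w ^ i /\<^sub>R fact i))"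
    using sums_iff_shift[of "\<lambda>n. w ^ n /\<^sub>R fact n" p] e by simp
  hence "(\<lambda>n. fact p / w ^ p * (w ^ (n + p) /\<^sub>R fact (n + p))) sums
          (fact p / w ^ p * (exp w - (\<Sum>i<p. w ^ i /\<^sub>R fact i)))"
    by (rule sums_mult)
  moreover have "(\<lambda>n. fact p / w ^ p * (w ^ (n + p) /\<^sub>R fact (n + p)))
      = (\<lambda>n. w ^ n / (of_nat ((n + p) choose p) * fact n))"
  proof (rule ext)
    fix n
    have "fact p / w ^ p * (w ^ (n + p) /\<^sub>R fact (n + p)) = fact p * w ^ n / fact (n + p)"
      using w by (simp add: scaleR_conv_of_real power_add field_simps)
    also have "\<dots> = w ^ n / (fact (n + p) / fact p)"
      by (simp add: field_simps)
    also have "\<dots> = w ^ n / (of_nat ((n + p) choose p) * fact n)"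
      by (simp only: coef_eq)
    finally show "fact p / w ^ p * (w ^ (n + p) /\<^sub>R fact (n + p)) = w ^ n / (of_nat ((n + p) choose p) * fact n)" .
  qed
  ultimately have s: "gser p w = fact p / w ^ p * (exp w - (\<Sum>i<p. w ^ i /\<^sub>R fact i))"
    unfolding gser_def by (simp add: sums_iff)
  have t: "(\<Sum>i<p. fact p / w ^ p * (w ^ i /\<^sub>R fact i)) = (\<Sum>k=1..p. of_nat (falling_fact p k) / w ^ k)"
  proof (rule sum.reindex_bij_witness[where i = "\<lambda>k. p - k" and j = "\<lambda>i. p - i"])
    fix i assume i: "i \<in> {..<p}"
    define k where "k = p - i"
    have k: "k \<in> {1..p}" and ik: "i = p - k" using i by (auto simp: k_def)
    have "(of_nat (falling_fact p k) :: complex) = fact p / fact (p - k)"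
    proof -
      have "(of_nat (falling_fact p k * fact (p - k)) :: complex) = of_nat (fact p)"
        using ff_fact[of k p] k by simp
      hence "(of_nat (falling_fact p k) :: complex) * fact (p - k) = fact p"
        by (simp only: of_nat_mult of_nat_fact)
      thus ?thesis by (simp add: eq_divide_eq)
    qed
    moreover have "(w ^ p :: complex) = w ^ k * w ^ (p - k)"
      using k by (simp add: power_add[symmetric])
    ultimately have eq: "fact p / w ^ p * (w ^ (p - k) /\<^sub>R fact (p - k)) = of_nat (falling_fact p k) / w ^ k"
      using w by (simp add: scaleR_conv_of_real) (simp add: divide_inverse mult.assoc)
    have pk: "p - (p - k) = k" using k by auto
    show "of_nat (falling_fact p (p - i)) / w ^ (p - i) = fact p / w ^ p * (w ^ i /\<^sub>R fact i)"
      unfolding ik pk by (rule eq[symmetric])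
  qed auto
  have "gser p w = fact p / w ^ p * exp w - (\<Sum>i<p. fact p / w ^ p * (w ^ i /\<^sub>R fact i))"
    unfolding s by (simp only: right_diff_distrib sum_distrib_left)
  also have "fact p / w ^ p * exp w = fact p * exp w / w ^ p"
    by (simp only: times_divide_eq_left divide_mult_eq)
  finally show ?thesis by (simp only: t)
qed

theorem mainTheorem5:
  fixes p :: nat and z :: complex
  assumes "exp z \<noteq> 1"
  shows "(\<lambda>n. pBell n p * z ^ n / fact n) sums
           (fact p * exp (exp z - 1) / (exp z - 1) ^ p
            - (\<Sum>k=1..p. of_nat (falling_fact p k) / (exp z - 1) ^ k))"
proof -
  have feq: "pBell_egf p = gser p \<circ> (\<lambda>z. exp z - 1)"
    by (simp add: fun_eq_iff pBell_egf_def gser_def)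
  have hol: "pBell_egf p holomorphic_on ball 0 (norm z + 1)"
    unfolding feq
    by (rule holomorphic_on_compose[OF _ holomorphic_on_subset[OF gser_holo]])
       (auto intro!: holomorphic_intros)
  have "(\<lambda>n. (deriv ^^ n) (pBell_egf p) 0 / fact n * (z - 0) ^ n) sums pBell_egf p z"
    by (rule holomorphic_power_series[OF hol]) simp
  moreover have "pBell_egf p z = fact p * exp (exp z - 1) / (exp z - 1) ^ p
            - (\<Sum>k=1..p. of_nat (falling_fact p k) / (exp z - 1) ^ k)"
    using gser_closed[of "exp z - 1" p] assms feq by simp
  ultimately show ?thesis
    by (simp add: pBell_def)
qed

end
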